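(* Let $A$ be a super von Neumann algebra whose graded center is $\mathbb{C}\cdot\mathbf{1}$. Then the ungraded center $Z^{\mathrm{un}}(A)$ is a graded subalgebra of $A$, and it is isomorphic, as a super algebra, either to $\mathbb{C}$ (trivially graded) or to $\mathbb{C}\oplus\mathbb{C}$ with grading automorphism swapping the two summands.
   Context: A super von Neumann algebra is a von Neumann algebra $A$ with a normal involutive $*$-automorphism $\gamma$, giving the grading $A=A^0\oplus A^1$ with $A^iA^j\subseteq A^{i+j}$. The graded center is $\{a\in A: [a,b]=0\ \forall b\in A\}$, where $[a,b]=ab-(-1)^{|a||b|}ba$ for homogeneous $a,b$, extended bilinearly. A super von Neumann algebra with graded center $\mathbb{C}$ is called a super factor. *)

theory Defs
  imports "HOL-Analysis.Analysis"
begin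

text \<open>Concrete model of a complex Hilbert space: \<open>\<ell>\<^sup>2(I)\<close> for an arbitrary index type \<open>'i\<close>
  (every complex Hilbert space is unitarily isomorphic to one of these).
  Vectors are functions \<open>'i \<Rightarrow> complex\<close>; operators are functions on vectors,
  normalised to vanish outside \<open>\<ell>\<^sup>2\<close>.\<close>

type_synonym 'i vec = "'i \<Rightarrow> complex"
type_synonym 'i op = "'i vec \<Rightarrow> 'i vec"

definition l2 :: "'i vec set" where
  "l2 = {f. (\<lambda>i. (cmod (f i))\<^sup>2) summable_on UNIV}"

definition l2norm :: "'i vec \<Rightarrow> real" where
  "l2norm f = sqrt (infsum (\<lambda>i. (cmod (f i))\<^sup>2) UNIV)"

definition ip :: "'i vec \<Rightarrow> 'i vec \<Rightarrow> complex" where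
  "ip f g = infsum (\<lambda>i. cnj (f i) * g i) UNIV"

definition bounded_op :: "'i op \<Rightarrow> bool" where
  "bounded_op T \<longleftrightarrow>
     (\<forall>f\<in>l2. T f \<in> l2) \<and>
     (\<forall>f\<in>l2. \<forall>g\<in>l2. \<forall>a b. T (\<lambda>i. a * f i + b * g i) = (\<lambda>i. a * T f i + b * T g i)) \<and>
     (\<exists>K. \<forall>f\<in>l2. l2norm (T f) \<le> K * l2norm f) \<and>
     (\<forall>f. f \<notin> l2 \<longrightarrow> T f = (\<lambda>i. 0))"

definition Bnd :: "'i op set" where "Bnd = {T. bounded_op T}"

definition op_id :: "'i op" where "op_id = (\<lambda>f. if f \<in> l2 then f else (\<lambda>i. 0))"
definition op_zero :: "'i op" where "op_zero = (\<lambda>f i. 0)"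
definition op_add :: "'i op \<Rightarrow> 'i op \<Rightarrow> 'i op" where "op_add S T = (\<lambda>f i. S f i + T f i)"
definition op_smult :: "complex \<Rightarrow> 'i op \<Rightarrow> 'i op" where "op_smult c T = (\<lambda>f i. c * T f i)"
definition op_mult :: "'i op \<Rightarrow> 'i op \<Rightarrow> 'i op" where "op_mult S T = S \<circ> T"

definition is_adjoint :: "'i op \<Rightarrow> 'i op \<Rightarrow> bool" where
  "is_adjoint T S \<longleftrightarrow> S \<in> Bnd \<and> (\<forall>f\<in>l2. \<forall>g\<in>l2. ip (T f) g = ip f (S g))"

definition self_adjoint :: "'i op \<Rightarrow> bool" where
  "self_adjoint T \<longleftrightarrow> T \<in> Bnd \<and> is_adjoint T T"

definition commutant :: "'i op set \<Rightarrow> 'i op set" where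
  "commutant S = {T \<in> Bnd. \<forall>s\<in>S. op_mult T s = op_mult s T}"

definition von_neumann_algebra :: "'i op set \<Rightarrow> bool" where
  "von_neumann_algebra M \<longleftrightarrow> M \<subseteq> Bnd \<and> op_id \<in> M \<and>
     (\<forall>T\<in>M. \<exists>S\<in>M. is_adjoint T S) \<and> commutant (commutant M) = M"

definition op_le :: "'i op \<Rightarrow> 'i op \<Rightarrow> bool" where
  "op_le A B \<longleftrightarrow> (\<forall>f\<in>l2. Re (ip f (B f)) - Re (ip f (A f)) \<ge> 0)"

definition op_sup :: "'i op set \<Rightarrow> 'i op \<Rightarrow> bool" where
  "op_sup S X \<longleftrightarrow> self_adjoint X \<and> (\<forall>s\<in>S. op_le s X) \<and>
     (\<forall>Y. self_adjoint Y \<and> (\<forall>s\<in>S. op_le s Y) \<longrightarrow> op_le X Y)"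

text \<open>Normality: preservation of suprema of bounded increasing nets of self-adjoint elements
  (a net is represented by its range, a nonempty upward directed set).\<close>
definition normal_map :: "'i op set \<Rightarrow> ('i op \<Rightarrow> 'i op) \<Rightarrow> bool" where
  "normal_map M \<gamma> \<longleftrightarrow>
     (\<forall>S X. S \<subseteq> M \<and> S \<noteq> {} \<and> (\<forall>s\<in>S. self_adjoint s) \<and>
            (\<forall>a\<in>S. \<forall>b\<in>S. \<exists>c\<in>S. op_le a c \<and> op_le b c) \<and> X \<in> M \<and> op_sup S X
        \<longrightarrow> op_sup (\<gamma> ` S) (\<gamma> X))"

definition star_automorphism :: "'i op set \<Rightarrow> ('i op \<Rightarrow> 'i op) \<Rightarrow> bool" where
  "star_automorphism M \<gamma> \<longleftrightarrow> bij_betw \<gamma> M M \<and>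
     (\<forall>a\<in>M. \<forall>b\<in>M. \<gamma> (op_add a b) = op_add (\<gamma> a) (\<gamma> b)) \<and>
     (\<forall>c. \<forall>a\<in>M. \<gamma> (op_smult c a) = op_smult c (\<gamma> a)) \<and>
     (\<forall>a\<in>M. \<forall>b\<in>M. \<gamma> (op_mult a b) = op_mult (\<gamma> a) (\<gamma> b)) \<and>
     \<gamma> op_id = op_id \<and>
     (\<forall>a\<in>M. \<forall>b\<in>M. is_adjoint a b \<longrightarrow> is_adjoint (\<gamma> a) (\<gamma> b))"

definition super_vN_algebra :: "'i op set \<Rightarrow> ('i op \<Rightarrow> 'i op) \<Rightarrow> bool" where
  "super_vN_algebra M \<gamma> \<longleftrightarrow> von_neumann_algebra M \<and> star_automorphism M \<gamma> \<and>
     normal_map M \<gamma> \<and> (\<forall>a\<in>M. \<gamma> (\<gamma> a) = a)"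

definition even_part :: "('i op \<Rightarrow> 'i op) \<Rightarrow> 'i op \<Rightarrow> 'i op" where
  "even_part \<gamma> a = op_smult (1/2) (op_add a (\<gamma> a))"
definition odd_part :: "('i op \<Rightarrow> 'i op) \<Rightarrow> 'i op \<Rightarrow> 'i op" where
  "odd_part \<gamma> a = op_smult (1/2) (op_add a (op_smult (-1) (\<gamma> a)))"

definition op_comm :: "'i op \<Rightarrow> 'i op \<Rightarrow> 'i op" where
  "op_comm a b = op_add (op_mult a b) (op_smult (-1) (op_mult b a))"
definition op_anticomm :: "'i op \<Rightarrow> 'i op \<Rightarrow> 'i op" where
  "op_anticomm a b = op_add (op_mult a b) (op_mult b a)"

text \<open>Graded commutator, extended bilinearly from homogeneous elements.\<close>
definition super_comm :: "('i op \<Rightarrow> 'i op) \<Rightarrow> 'i op \<Rightarrow> 'i op \<Rightarrow> 'i op" where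
  "super_comm \<gamma> a b =
    (let a0 = even_part \<gamma> a; a1 = odd_part \<gamma> a; b0 = even_part \<gamma> b; b1 = odd_part \<gamma> b
     in op_add (op_add (op_comm a0 b0) (op_comm a0 b1))
               (op_add (op_comm a1 b0) (op_anticomm a1 b1)))"

definition graded_center :: "'i op set \<Rightarrow> ('i op \<Rightarrow> 'i op) \<Rightarrow> 'i op set" where
  "graded_center M \<gamma> = {a \<in> M. \<forall>b\<in>M. super_comm \<gamma> a b = op_zero}"

definition ungraded_center :: "'i op set \<Rightarrow> 'i op set" where
  "ungraded_center M = {a \<in> M. \<forall>b\<in>M. op_mult a b = op_mult b a}"

text \<open>A graded subalgebra: a unital subalgebra closed under the grading automorphism
  (equivalently, containing the homogeneous components of its elements).\<close>
definition graded_subalgebra :: "'i op set \<Rightarrow> ('i op \<Rightarrow> 'i op) \<Rightarrow> 'i op set \<Rightarrow> bool" where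
  "graded_subalgebra M \<gamma> Z \<longleftrightarrow> Z \<subseteq> M \<and> op_id \<in> Z \<and>
     (\<forall>a\<in>Z. \<forall>b\<in>Z. op_add a b \<in> Z \<and> op_mult a b \<in> Z) \<and>
     (\<forall>c. \<forall>a\<in>Z. op_smult c a \<in> Z) \<and> (\<forall>a\<in>Z. \<gamma> a \<in> Z)"

definition super_alg_iso :: "'i op set \<Rightarrow> ('i op \<Rightarrow> 'i op) \<Rightarrow>
    ('b \<Rightarrow> 'b \<Rightarrow> 'b) \<Rightarrow> ('b \<Rightarrow> 'b \<Rightarrow> 'b) \<Rightarrow> (complex \<Rightarrow> 'b \<Rightarrow> 'b) \<Rightarrow> 'b \<Rightarrow> ('b \<Rightarrow> 'b)
    \<Rightarrow> ('i op \<Rightarrow> 'b) \<Rightarrow> bool" where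
  "super_alg_iso Z \<gamma> add mul sm one \<delta> \<phi> \<longleftrightarrow> bij_betw \<phi> Z UNIV \<and>
     (\<forall>a\<in>Z. \<forall>b\<in>Z. \<phi> (op_add a b) = add (\<phi> a) (\<phi> b) \<and> \<phi> (op_mult a b) = mul (\<phi> a) (\<phi> b)) \<and>
     (\<forall>c. \<forall>a\<in>Z. \<phi> (op_smult c a) = sm c (\<phi> a)) \<and> \<phi> op_id = one \<and>
     (\<forall>a\<in>Z. \<phi> (\<gamma> a) = \<delta> (\<phi> a))"

definition iso_to_C :: "'i op set \<Rightarrow> ('i op \<Rightarrow> 'i op) \<Rightarrow> ('i op \<Rightarrow> complex) \<Rightarrow> bool" where
  "iso_to_C Z \<gamma> \<phi> \<longleftrightarrow> super_alg_iso Z \<gamma> (+) (*) (*) 1 (\<lambda>z. z) \<phi>"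

definition iso_to_CC :: "'i op set \<Rightarrow> ('i op \<Rightarrow> 'i op) \<Rightarrow> ('i op \<Rightarrow> complex \<times> complex) \<Rightarrow> bool" where
  "iso_to_CC Z \<gamma> \<phi> \<longleftrightarrow> super_alg_iso Z \<gamma>
     (\<lambda>(x, y) (u, v). (x + u, y + v)) (\<lambda>(x, y) (u, v). (x * u, y * v))
     (\<lambda>c (x, y). (c * x, c * y)) (1, 1) (\<lambda>(x, y). (y, x)) \<phi>"

end

theory Submission
  imports Defs
begin


lemma l2_zero[simp]: "(\<lambda>i. 0) \<in> l2"
  by (simp add: l2_def)

lemma sq2: fixes a b :: real shows "(a+b)^2 \<le> 2*a^2+2*b^2"
proof -
  have "0 \<le> (a-b)^2" by simp
  thus ?thesis by (simp add: power2_eq_square algebra_simps)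
qed

lemma sq_bound: "(cmod (x*a + y*b))\<^sup>2 \<le> 2*(cmod x)\<^sup>2*(cmod a)\<^sup>2 + 2*(cmod y)\<^sup>2*(cmod b)\<^sup>2"
proof -
  have "cmod (x*a + y*b) \<le> cmod x * cmod a + cmod y * cmod b"
    by (metis norm_mult norm_triangle_ineq)
  hence "(cmod (x*a + y*b))\<^sup>2 \<le> (cmod x * cmod a + cmod y * cmod b)\<^sup>2"
    by (simp add: power_mono)
  also have "\<dots> \<le> 2*(cmod x)\<^sup>2*(cmod a)\<^sup>2 + 2*(cmod y)\<^sup>2*(cmod b)\<^sup>2"
    using sq2[of "cmod x * cmod a" "cmod y * cmod b"] by (simp add: power_mult_distrib)
  finally show ?thesis .
qed

lemma l2_lin:
  assumes "f \<in> l2" "g \<in> l2"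
  shows "(\<lambda>i. x * f i + y * g i) \<in> l2"
proof -
  have s: "(\<lambda>i. 2*(cmod x)\<^sup>2*(cmod (f i))\<^sup>2 + 2*(cmod y)\<^sup>2*(cmod (g i))\<^sup>2) summable_on UNIV"
    using assms unfolding l2_def
    by (intro summable_on_add summable_on_cmult_right) auto
  show ?thesis unfolding l2_def mem_Collect_eq
    by (rule summable_on_comparison_test[OF s]) (auto simp: sq_bound)
qed

lemma ip_summable:
  assumes "f \<in> l2" "g \<in> l2"
  shows "(\<lambda>i. cnj (f i) * g i) summable_on UNIV"
proof -
  have s: "(\<lambda>i. (cmod (f i))\<^sup>2 + (cmod (g i))\<^sup>2) summable_on UNIV"
    using assms unfolding l2_def by (intro summable_on_add) auto
  have "(\<lambda>i. norm (cnj (f i) * g i)) summable_on UNIV"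
  proof (rule summable_on_comparison_test[OF s])
    fix i
    have "cmod (f i) * cmod (g i) \<le> (cmod (f i))\<^sup>2 + (cmod (g i))\<^sup>2"
    proof -
      have "0 \<le> (cmod (f i) - cmod (g i))^2" by simp
      hence "2 * (cmod (f i) * cmod (g i)) \<le> cmod (f i) * cmod (f i) + cmod (g i) * cmod (g i)"
        by (simp add: power2_eq_square algebra_simps)
      moreover have "0 \<le> cmod (f i) * cmod (g i)" by simp
      ultimately show ?thesis unfolding power2_eq_square by linarith
    qed
    thus "norm (cnj (f i) * g i) \<le> (cmod (f i))\<^sup>2 + (cmod (g i))\<^sup>2" by (simp add: norm_mult)
  qed simp
  thus ?thesis by (rule abs_summable_summable)
qed

lemma ip_lin:
  assumes "f \<in> l2" "g \<in> l2" "h \<in> l2"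
  shows "ip f (\<lambda>i. x * g i + y * h i) = x * ip f g + y * ip f h"
proof -
  have "ip f (\<lambda>i. x * g i + y * h i) = infsum (\<lambda>i. x * (cnj (f i) * g i) + y * (cnj (f i) * h i)) UNIV"
    unfolding ip_def by (simp add: algebra_simps)
  also have "\<dots> = infsum (\<lambda>i. x * (cnj (f i) * g i)) UNIV + infsum (\<lambda>i. y * (cnj (f i) * h i)) UNIV"
    using assms by (intro infsum_add summable_on_cmult_right ip_summable)
  also have "\<dots> = x * ip f g + y * ip f h"
    unfolding ip_def using assms by (simp add: infsum_cmult_right ip_summable)
  finally show ?thesis .
qed

lemma ip_cnj: "ip g f = cnj (ip f g)"
  unfolding ip_def by (simp flip: infsum_cnj add: mult.commute)

lemma ip_zero_right[simp]: "ip f (\<lambda>i. 0) = 0"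
  unfolding ip_def by simp

lemma ip_self_zero:
  assumes "f \<in> l2" "ip f f = 0"
  shows "f = (\<lambda>i. 0)"
proof
  fix j
  let ?g = "\<lambda>i. (cmod (f i))\<^sup>2"
  have sg: "?g summable_on UNIV" using assms(1) by (simp add: l2_def)
  have "((\<lambda>i. complex_of_real (?g i)) has_sum complex_of_real (infsum ?g UNIV)) UNIV"
    using has_sum_of_real[OF has_sum_infsum[OF sg]] .
  moreover have "(\<lambda>i. complex_of_real (?g i)) = (\<lambda>i. cnj (f i) * f i)"
    by (rule ext) (metis complex_norm_square mult.commute)
  ultimately have "ip f f = complex_of_real (infsum ?g UNIV)"
    unfolding ip_def by (simp add: infsumI)
  hence z: "infsum ?g UNIV = 0" using assms(2) by simp
  have "infsum ?g {j} \<le> infsum ?g UNIV"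
    by (rule infsum_mono2) (use sg in auto)
  hence "?g j \<le> 0" using z by simp
  thus "f j = 0" by simp
qed

lemma bnd_l2: "T \<in> Bnd \<Longrightarrow> T f \<in> l2"
  unfolding Bnd_def bounded_op_def by (cases "f \<in> l2") auto

lemma bnd_out: "T \<in> Bnd \<Longrightarrow> f \<notin> l2 \<Longrightarrow> T f = (\<lambda>i. 0)"
  unfolding Bnd_def bounded_op_def by auto

lemma bnd_lin: "T \<in> Bnd \<Longrightarrow> f \<in> l2 \<Longrightarrow> g \<in> l2 \<Longrightarrow>
   T (\<lambda>i. a * f i + b * g i) = (\<lambda>i. a * T f i + b * T g i)"
  unfolding Bnd_def bounded_op_def by auto

lemma bnd_zero: "T \<in> Bnd \<Longrightarrow> T (\<lambda>i. 0) = (\<lambda>i. 0)"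
  using bnd_lin[of T "\<lambda>i. 0" "\<lambda>i. 0" 0 0] by simp

lemma l2_smult_rev: "(\<lambda>i. a * f i) \<in> l2 \<Longrightarrow> a \<noteq> 0 \<Longrightarrow> f \<in> l2"
  using l2_lin[of "\<lambda>i. a * f i" "\<lambda>i. 0" "1/a" 0] by simp

lemma bnd_smult: "T \<in> Bnd \<Longrightarrow> T (\<lambda>i. a * f i) = (\<lambda>i. a * T f i)"
proof (cases "f \<in> l2")
  case True
  assume T: "T \<in> Bnd"
  thus ?thesis using bnd_lin[OF T True True, of a 0] by simp
next
  case False
  assume T: "T \<in> Bnd"
  show ?thesis
  proof (cases "a = 0")
    case True thus ?thesis using bnd_zero[OF T] by simp
  next
    case a: False
    hence "(\<lambda>i. a * f i) \<notin> l2" using False l2_smult_rev by blast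
    thus ?thesis using bnd_out[OF T] False by simp
  qed
qed

lemma bnd_add: "T \<in> Bnd \<Longrightarrow> f \<in> l2 \<Longrightarrow> g \<in> l2 \<Longrightarrow>
   T (\<lambda>i. f i + g i) = (\<lambda>i. T f i + T g i)"
  using bnd_lin[of T f g 1 1] by simp

lemma l2norm_nonneg: "l2norm f \<ge> 0"
  unfolding l2norm_def by (simp add: infsum_nonneg)

lemma l2norm_sq: "(l2norm f)\<^sup>2 = infsum (\<lambda>i. (cmod (f i))\<^sup>2) UNIV"
  unfolding l2norm_def by (simp add: infsum_nonneg)

lemma l2norm_add_bound:
  assumes "f \<in> l2" "g \<in> l2"
  shows "(l2norm (\<lambda>i. f i + g i))\<^sup>2 \<le> 2 * (l2norm f)\<^sup>2 + 2 * (l2norm g)\<^sup>2"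
proof -
  have s: "(\<lambda>i. 2*(cmod (f i))\<^sup>2 + 2*(cmod (g i))\<^sup>2) summable_on UNIV"
    using assms unfolding l2_def
    by (intro summable_on_add summable_on_cmult_right) auto
  have s2: "(\<lambda>i. (cmod (f i + g i))\<^sup>2) summable_on UNIV"
    using l2_lin[OF assms, of 1 1] by (simp add: l2_def)
  have "(l2norm (\<lambda>i. f i + g i))\<^sup>2 \<le> infsum (\<lambda>i. 2*(cmod (f i))\<^sup>2 + 2*(cmod (g i))\<^sup>2) UNIV"
    unfolding l2norm_sq using sq_bound[of 1 _ 1] by (intro infsum_mono[OF s2 s]) simp
  also have "\<dots> = 2 * (l2norm f)\<^sup>2 + 2 * (l2norm g)\<^sup>2"
    unfolding l2norm_sq using assms unfolding l2_def
    by (simp add: infsum_add summable_on_cmult_right infsum_cmult_right)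
  finally show ?thesis .
qed

lemma l2norm_smult:
  assumes "f \<in> l2"
  shows "l2norm (\<lambda>i. c * f i) = cmod c * l2norm f"
proof -
  have "infsum (\<lambda>i. (cmod (c * f i))\<^sup>2) UNIV = (cmod c)\<^sup>2 * infsum (\<lambda>i. (cmod (f i))\<^sup>2) UNIV"
    using assms unfolding l2_def by (simp add: norm_mult power_mult_distrib infsum_cmult_right)
  thus ?thesis unfolding l2norm_def by (simp add: real_sqrt_mult)
qed

lemma bnd_K: "(T :: 'i op) \<in> Bnd \<Longrightarrow> \<exists>K\<ge>0. \<forall>f\<in>l2. l2norm (T f) \<le> K * l2norm f"
proof -
  assume "T \<in> Bnd"
  then obtain K where K: "\<forall>f\<in>l2. l2norm (T f) \<le> K * l2norm f"
    unfolding Bnd_def bounded_op_def by auto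
  have "\<forall>f\<in>l2. l2norm (T f) \<le> max K 0 * l2norm f"
  proof
    fix f :: "'i vec" assume "f \<in> l2"
    hence "l2norm (T f) \<le> K * l2norm f" using K by auto
    also have "\<dots> \<le> max K 0 * l2norm f" by (intro mult_right_mono) (auto simp: l2norm_nonneg)
    finally show "l2norm (T f) \<le> max K 0 * l2norm f" .
  qed
  thus ?thesis by (intro exI[of _ "max K 0"]) auto
qed

lemma sq_aux: fixes a b :: real assumes "a \<ge> 0" "b \<ge> 0"
  shows "2*a^2+2*b^2 \<le> ((2*a+2*b))^2"
proof -
  have "0 \<le> a*b" using assms by simp
  moreover have "((2*a+2*b))^2 = 4*a^2 + 8*(a*b) + 4*b^2" by (simp add: power2_eq_square algebra_simps)
  moreover have "0 \<le> a^2" "0 \<le> b^2" by simp_all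
  ultimately show ?thesis by linarith
qed

lemma Bnd_add: assumes S: "(S :: 'i op) \<in> Bnd" and T: "T \<in> Bnd" shows "op_add S T \<in> Bnd"
proof -
  obtain K1 where K1: "K1 \<ge> 0" "\<forall>f\<in>l2. l2norm (S f) \<le> K1 * l2norm f" using bnd_K[OF S] by auto
  obtain K2 where K2: "K2 \<ge> 0" "\<forall>f\<in>l2. l2norm (T f) \<le> K2 * l2norm f" using bnd_K[OF T] by auto
  have bound: "l2norm (op_add S T f) \<le> (2*K1 + 2*K2) * l2norm f" if f: "f \<in> l2" for f
  proof -
    have a: "l2norm (S f) \<le> K1 * l2norm f" "l2norm (T f) \<le> K2 * l2norm f" using K1 K2 f by auto
    have "(l2norm (S f))\<^sup>2 \<le> (K1 * l2norm f)\<^sup>2"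
      using a(1) l2norm_nonneg by (intro power_mono) auto
    moreover have "(l2norm (T f))\<^sup>2 \<le> (K2 * l2norm f)\<^sup>2"
      using a(2) l2norm_nonneg by (intro power_mono) auto
    moreover have "(l2norm (op_add S T f))\<^sup>2 \<le> 2 * (l2norm (S f))\<^sup>2 + 2 * (l2norm (T f))\<^sup>2"
      unfolding op_add_def by (rule l2norm_add_bound[OF bnd_l2[OF S] bnd_l2[OF T]])
    ultimately have "(l2norm (op_add S T f))\<^sup>2 \<le> 2 * (K1 * l2norm f)\<^sup>2 + 2 * (K2 * l2norm f)\<^sup>2"
      by linarith
    also have "\<dots> \<le> (2*(K1 * l2norm f) + 2*(K2 * l2norm f))\<^sup>2"
      using K1(1) K2(1) l2norm_nonneg[of f] by (intro sq_aux) auto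
    also have "\<dots> = ((2*K1 + 2*K2) * l2norm f)\<^sup>2"
      by (simp add: algebra_simps)
    finally have sq: "(l2norm (op_add S T f))\<^sup>2 \<le> ((2*K1 + 2*K2) * l2norm f)\<^sup>2" .
    show ?thesis
      using K1(1) K2(1) l2norm_nonneg[of f] by (intro power2_le_imp_le[OF sq]) auto
  qed
  show ?thesis
    unfolding Bnd_def bounded_op_def mem_Collect_eq
  proof (intro conjI)
    show "\<forall>f\<in>l2. op_add S T f \<in> l2"
      unfolding op_add_def using l2_lin[OF bnd_l2[OF S] bnd_l2[OF T], where x=1 and y=1] by simp
    show "\<forall>f\<in>l2. \<forall>g\<in>l2. \<forall>a b. op_add S T (\<lambda>i. a * f i + b * g i) = (\<lambda>i. a * op_add S T f i + b * op_add S T g i)"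
    proof (intro ballI allI)
      fix f g :: "'i vec" and a b assume fg: "f \<in> l2" "g \<in> l2"
      note e = bnd_lin[OF S fg, of a b] bnd_lin[OF T fg, of a b]
      show "op_add S T (\<lambda>i. a * f i + b * g i) = (\<lambda>i. a * op_add S T f i + b * op_add S T g i)"
        unfolding op_add_def e by (simp add: algebra_simps)
    qed
    show "\<exists>K. \<forall>f\<in>l2. l2norm (op_add S T f) \<le> K * l2norm f" using bound by blast
    show "\<forall>f. f \<notin> l2 \<longrightarrow> op_add S T f = (\<lambda>i. 0)"
      unfolding op_add_def using bnd_out[OF S] bnd_out[OF T] by simp
  qed
qed

lemma Bnd_smult: assumes T: "(T :: 'i op) \<in> Bnd" shows "op_smult c T \<in> Bnd"
proof -
  obtain K where K: "K \<ge> 0" "\<forall>f\<in>l2. l2norm (T f) \<le> K * l2norm f" using bnd_K[OF T] by auto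
  show ?thesis
    unfolding Bnd_def bounded_op_def mem_Collect_eq
  proof (intro conjI)
    show "\<forall>f\<in>l2. op_smult c T f \<in> l2"
      unfolding op_smult_def using l2_lin[OF bnd_l2[OF T] bnd_l2[OF T], where x=c and y=0] by simp
    show "\<forall>f\<in>l2. \<forall>g\<in>l2. \<forall>a b. op_smult c T (\<lambda>i. a * f i + b * g i) = (\<lambda>i. a * op_smult c T f i + b * op_smult c T g i)"
    proof (intro ballI allI)
      fix f g :: "'i vec" and a b assume fg: "f \<in> l2" "g \<in> l2"
      note e = bnd_lin[OF T fg, of a b]
      show "op_smult c T (\<lambda>i. a * f i + b * g i) = (\<lambda>i. a * op_smult c T f i + b * op_smult c T g i)"
        unfolding op_smult_def e by (simp add: algebra_simps)
    qed
    have "\<forall>f\<in>l2. l2norm (op_smult c T f) \<le> (cmod c * K) * l2norm f"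
    proof
      fix f :: "'i vec" assume f: "f \<in> l2"
      have "l2norm (op_smult c T f) = cmod c * l2norm (T f)"
        unfolding op_smult_def using l2norm_smult bnd_l2[OF T] by blast
      also have "\<dots> \<le> cmod c * (K * l2norm f)" using K f by (intro mult_left_mono) auto
      finally show "l2norm (op_smult c T f) \<le> (cmod c * K) * l2norm f" by simp
    qed
    thus "\<exists>K. \<forall>f\<in>l2. l2norm (op_smult c T f) \<le> K * l2norm f" by blast
    show "\<forall>f. f \<notin> l2 \<longrightarrow> op_smult c T f = (\<lambda>i. 0)"
      unfolding op_smult_def using bnd_out[OF T] by simp
  qed
qed

lemma Bnd_mult: assumes S: "(S :: 'i op) \<in> Bnd" and T: "T \<in> Bnd" shows "op_mult S T \<in> Bnd"
proof -
  obtain K1 where K1: "K1 \<ge> 0" "\<forall>f\<in>l2. l2norm (S f) \<le> K1 * l2norm f" using bnd_K[OF S] by auto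
  obtain K2 where K2: "K2 \<ge> 0" "\<forall>f\<in>l2. l2norm (T f) \<le> K2 * l2norm f" using bnd_K[OF T] by auto
  show ?thesis
    unfolding Bnd_def bounded_op_def mem_Collect_eq
  proof (intro conjI)
    show "\<forall>f\<in>l2. op_mult S T f \<in> l2"
      unfolding op_mult_def using bnd_l2[OF S] by simp
    show "\<forall>f\<in>l2. \<forall>g\<in>l2. \<forall>a b. op_mult S T (\<lambda>i. a * f i + b * g i) = (\<lambda>i. a * op_mult S T f i + b * op_mult S T g i)"
    proof (intro ballI allI)
      fix f g :: "'i vec" and a b assume fg: "f \<in> l2" "g \<in> l2"
      note e = bnd_lin[OF T fg, of a b] bnd_lin[OF S bnd_l2[OF T] bnd_l2[OF T], of a "f" b "g"]
      show "op_mult S T (\<lambda>i. a * f i + b * g i) = (\<lambda>i. a * op_mult S T f i + b * op_mult S T g i)"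
        unfolding op_mult_def comp_def e(1) e(2) by simp
    qed
    have "\<forall>f\<in>l2. l2norm (op_mult S T f) \<le> (K1 * K2) * l2norm f"
    proof
      fix f :: "'i vec" assume f: "f \<in> l2"
      have "l2norm (op_mult S T f) \<le> K1 * l2norm (T f)"
        unfolding op_mult_def using K1 bnd_l2[OF T] by simp
      also have "\<dots> \<le> K1 * (K2 * l2norm f)" using K1 K2 f by (intro mult_left_mono) auto
      finally show "l2norm (op_mult S T f) \<le> (K1 * K2) * l2norm f" by simp
    qed
    thus "\<exists>K. \<forall>f\<in>l2. l2norm (op_mult S T f) \<le> K * l2norm f" by blast
    show "\<forall>f. f \<notin> l2 \<longrightarrow> op_mult S T f = (\<lambda>i. 0)"
      unfolding op_mult_def using bnd_out[OF T] bnd_zero[OF S] by simp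
  qed
qed



definition evec :: "'i vec" where "evec = (\<lambda>i. if i = undefined then 1 else 0)"

lemma evec_l2: "evec \<in> l2"
proof -
  have "(\<lambda>i. (cmod (evec i))\<^sup>2) summable_on {undefined}" by simp
  thus ?thesis unfolding l2_def mem_Collect_eq
    by (subst summable_on_cong_neutral[where S = UNIV and T = "{undefined}" and g = "\<lambda>i. (cmod (evec i))\<^sup>2"])
       (auto simp: evec_def)
qed

lemma evec_val: "evec undefined = 1" by (simp add: evec_def)

lemma op_id_apply: "f \<in> l2 \<Longrightarrow> op_id f = f" by (simp add: op_id_def)

lemma sc_inj: assumes "op_smult c (op_id :: 'i op) = op_smult d op_id" shows "c = d"
proof -
  have "op_smult c (op_id :: 'i op) evec undefined = op_smult d (op_id :: 'i op) evec undefined"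
    using assms by metis
  thus ?thesis by (simp add: op_smult_def op_id_apply evec_l2 evec_val)
qed

lemma Bnd_id: "op_id \<in> Bnd"
  unfolding Bnd_def bounded_op_def mem_Collect_eq op_id_def
  using l2_lin by (auto intro!: exI[of _ 1])

lemma Bnd_zero: "op_zero \<in> Bnd"
  unfolding Bnd_def bounded_op_def mem_Collect_eq op_zero_def
  by (auto intro!: exI[of _ 0] simp: l2norm_def)

lemma id_left: "T \<in> Bnd \<Longrightarrow> op_mult op_id T = T"
  by (rule ext) (simp add: op_mult_def op_id_apply bnd_l2)

lemma id_right: "T \<in> Bnd \<Longrightarrow> op_mult T op_id = T"
  by (rule ext) (auto simp: op_mult_def op_id_def bnd_out bnd_zero)

lemma mult_add_left: "a \<in> Bnd \<Longrightarrow> b \<in> Bnd \<Longrightarrow> c \<in> Bnd \<Longrightarrow>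
  op_mult a (op_add b c) = op_add (op_mult a b) (op_mult a c)"
  by (rule ext) (simp add: op_mult_def op_add_def bnd_add bnd_l2)

lemma mult_smult_left: "a \<in> Bnd \<Longrightarrow> op_mult a (op_smult x b) = op_smult x (op_mult a b)"
  by (rule ext) (simp add: op_mult_def op_smult_def bnd_smult)

lemma mult_add_right: "op_mult (op_add b c) a = op_add (op_mult b a) (op_mult c a)"
  by (simp add: op_mult_def op_add_def fun_eq_iff)

lemma mult_smult_right: "op_mult (op_smult x b) a = op_smult x (op_mult b a)"
  by (simp add: op_mult_def op_smult_def fun_eq_iff)

lemma mult_assoc: "op_mult (op_mult a b) c = op_mult a (op_mult b c)"
  by (simp add: op_mult_def comp_assoc)

lemma commutant_Bnd: "commutant S \<subseteq> Bnd" by (auto simp: commutant_def)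

lemma comm_add: assumes "S \<subseteq> Bnd" "a \<in> commutant S" "b \<in> commutant S" shows "op_add a b \<in> commutant S"
proof -
  have ab: "a \<in> Bnd" "b \<in> Bnd" using assms by (auto simp: commutant_def)
  have "op_mult (op_add a b) s = op_mult s (op_add a b)" if s: "s \<in> S" for s
  proof -
    have sB: "s \<in> Bnd" using assms s by auto
    have "op_mult a s = op_mult s a" "op_mult b s = op_mult s b" using assms s by (auto simp: commutant_def)
    thus ?thesis by (simp add: mult_add_right mult_add_left[OF sB ab])
  qed
  thus ?thesis using Bnd_add[OF ab] by (simp add: commutant_def)
qed

lemma comm_smult: assumes "S \<subseteq> Bnd" "a \<in> commutant S" shows "op_smult x a \<in> commutant S"
proof -
  have ab: "a \<in> Bnd" using assms by (auto simp: commutant_def)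
  have "op_mult (op_smult x a) s = op_mult s (op_smult x a)" if s: "s \<in> S" for s
  proof -
    have sB: "s \<in> Bnd" using assms s by auto
    have "op_mult a s = op_mult s a" using assms s by (auto simp: commutant_def)
    thus ?thesis by (simp add: mult_smult_right mult_smult_left[OF sB])
  qed
  thus ?thesis using Bnd_smult[OF ab] by (simp add: commutant_def)
qed

lemma comm_mult: assumes "a \<in> commutant S" "b \<in> commutant S" shows "op_mult a b \<in> commutant S"
proof -
  have ab: "a \<in> Bnd" "b \<in> Bnd" using assms by (auto simp: commutant_def)
  have "op_mult (op_mult a b) s = op_mult s (op_mult a b)" if s: "s \<in> S" for s
  proof -
    have "op_mult a s = op_mult s a" "op_mult b s = op_mult s b" using assms s by (auto simp: commutant_def)
    thus ?thesis by (metis mult_assoc)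
  qed
  thus ?thesis using Bnd_mult[OF ab] by (simp add: commutant_def)
qed



lemma adj_sym: "is_adjoint T S \<Longrightarrow> f \<in> l2 \<Longrightarrow> g \<in> l2 \<Longrightarrow> ip (S f) g = ip f (T g)"
  unfolding is_adjoint_def by (metis ip_cnj)

lemma adj_app: "is_adjoint T S \<Longrightarrow> f \<in> l2 \<Longrightarrow> g \<in> l2 \<Longrightarrow> ip (T f) g = ip f (S g)"
  unfolding is_adjoint_def by blast

lemma vec_eq:
  assumes "x \<in> l2" "y \<in> l2" "\<forall>f\<in>l2. ip f x = ip f y"
  shows "x = y"
proof -
  let ?h = "\<lambda>i. 1 * x i + (-1) * y i"
  have h: "?h \<in> l2" using l2_lin[OF assms(1,2)] .
  have "ip ?h ?h = 1 * ip ?h x + (-1) * ip ?h y" using ip_lin[OF h assms(1,2)] .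
  also have "\<dots> = 0" using assms(3) h by simp
  finally have "?h = (\<lambda>i. 0)" using ip_self_zero[OF h] by simp
  thus ?thesis by (simp add: fun_eq_iff)
qed

lemma ip_neg_left: "ip (\<lambda>i. (-1) * x i) y = - ip x y"
  unfolding ip_def by (simp add: infsum_uminus)

lemma ip_neg_right: "ip x (\<lambda>i. (-1) * y i) = - ip x y"
  unfolding ip_def by (simp add: infsum_uminus)

locale sv =
  fixes M :: "'i op set" and \<gamma> :: "'i op \<Rightarrow> 'i op"
  assumes svn: "super_vN_algebra M \<gamma>"
    and gc: "graded_center M \<gamma> = {op_smult c op_id | c. True}"
begin

lemma MB: "a \<in> M \<Longrightarrow> a \<in> Bnd"
  using svn unfolding super_vN_algebra_def von_neumann_algebra_def by auto

lemma idM: "op_id \<in> M"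
  using svn unfolding super_vN_algebra_def von_neumann_algebra_def by auto

lemma M_eq: "commutant (commutant M) = M"
  using svn unfolding super_vN_algebra_def von_neumann_algebra_def by auto

lemma adjM: "a \<in> M \<Longrightarrow> \<exists>S\<in>M. is_adjoint a S"
  using svn unfolding super_vN_algebra_def von_neumann_algebra_def by auto

lemma gM: "a \<in> M \<Longrightarrow> \<gamma> a \<in> M"
  using svn unfolding super_vN_algebra_def star_automorphism_def bij_betw_def by auto

lemma g_add: "a \<in> M \<Longrightarrow> b \<in> M \<Longrightarrow> \<gamma> (op_add a b) = op_add (\<gamma> a) (\<gamma> b)"
  using svn unfolding super_vN_algebra_def star_automorphism_def by auto

lemma g_smult: "a \<in> M \<Longrightarrow> \<gamma> (op_smult c a) = op_smult c (\<gamma> a)"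
  using svn unfolding super_vN_algebra_def star_automorphism_def by auto

lemma g_mult: "a \<in> M \<Longrightarrow> b \<in> M \<Longrightarrow> \<gamma> (op_mult a b) = op_mult (\<gamma> a) (\<gamma> b)"
  using svn unfolding super_vN_algebra_def star_automorphism_def by auto

lemma g_id: "\<gamma> op_id = op_id"
  using svn unfolding super_vN_algebra_def star_automorphism_def by auto

lemma g_adj: "a \<in> M \<Longrightarrow> b \<in> M \<Longrightarrow> is_adjoint a b \<Longrightarrow> is_adjoint (\<gamma> a) (\<gamma> b)"
  using svn unfolding super_vN_algebra_def star_automorphism_def by auto

lemma g_inv: "a \<in> M \<Longrightarrow> \<gamma> (\<gamma> a) = a"
  using svn unfolding super_vN_algebra_def by auto

lemma cM_Bnd: "commutant M \<subseteq> Bnd" by (rule commutant_Bnd)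

lemma M_add: "a \<in> M \<Longrightarrow> b \<in> M \<Longrightarrow> op_add a b \<in> M"
  using comm_add[OF cM_Bnd, of a b] M_eq by simp

lemma M_smult: "a \<in> M \<Longrightarrow> op_smult x a \<in> M"
  using comm_smult[OF cM_Bnd, of a x] M_eq by simp

lemma M_mult: "a \<in> M \<Longrightarrow> b \<in> M \<Longrightarrow> op_mult a b \<in> M"
  using comm_mult[of a "commutant M" b] M_eq by simp

abbreviation Z where "Z \<equiv> ungraded_center M"

lemma Z_M: "a \<in> Z \<Longrightarrow> a \<in> M" by (simp add: ungraded_center_def)

lemma Z_comm: "a \<in> Z \<Longrightarrow> b \<in> M \<Longrightarrow> op_mult a b = op_mult b a" by (simp add: ungraded_center_def)

lemma id_Z: "op_id \<in> Z"
  unfolding ungraded_center_def using idM MB id_left id_right by (simp add: MB id_left id_right)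

lemma Z_add: assumes "a \<in> Z" "b \<in> Z" shows "op_add a b \<in> Z"
proof -
  have "op_mult (op_add a b) c = op_mult c (op_add a b)" if c: "c \<in> M" for c
  proof -
    have "op_mult (op_add a b) c = op_add (op_mult a c) (op_mult b c)" by (rule mult_add_right)
    also have "\<dots> = op_add (op_mult c a) (op_mult c b)"
      using Z_comm[OF assms(1) c] Z_comm[OF assms(2) c] by simp
    also have "\<dots> = op_mult c (op_add a b)"
      by (rule mult_add_left[OF MB[OF c] MB[OF Z_M[OF assms(1)]] MB[OF Z_M[OF assms(2)]], symmetric])
    finally show ?thesis .
  qed
  thus ?thesis using M_add[OF Z_M[OF assms(1)] Z_M[OF assms(2)]] by (simp add: ungraded_center_def)
qed

lemma Z_smult: assumes "a \<in> Z" shows "op_smult x a \<in> Z"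
proof -
  have "op_mult (op_smult x a) c = op_mult c (op_smult x a)" if c: "c \<in> M" for c
  proof -
    have "op_mult (op_smult x a) c = op_smult x (op_mult a c)" by (rule mult_smult_right)
    also have "\<dots> = op_smult x (op_mult c a)" using Z_comm[OF assms(1) c] by simp
    also have "\<dots> = op_mult c (op_smult x a)" by (rule mult_smult_left[OF MB[OF c], symmetric])
    finally show ?thesis .
  qed
  thus ?thesis using M_smult[OF Z_M[OF assms(1)]] by (simp add: ungraded_center_def)
qed

lemma Z_mult: assumes "a \<in> Z" "b \<in> Z" shows "op_mult a b \<in> Z"
proof -
  have "op_mult (op_mult a b) c = op_mult c (op_mult a b)" if c: "c \<in> M" for c
  proof -
    have "op_mult (op_mult a b) c = op_mult a (op_mult b c)" by (rule mult_assoc)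
    also have "\<dots> = op_mult a (op_mult c b)" using Z_comm[OF assms(2) c] by simp
    also have "\<dots> = op_mult (op_mult a c) b" by (rule mult_assoc[symmetric])
    also have "\<dots> = op_mult (op_mult c a) b" using Z_comm[OF assms(1) c] by simp
    also have "\<dots> = op_mult c (op_mult a b)" by (rule mult_assoc)
    finally show ?thesis .
  qed
  thus ?thesis using M_mult[OF Z_M[OF assms(1)] Z_M[OF assms(2)]] by (simp add: ungraded_center_def)
qed

lemma Z_g: assumes "a \<in> Z" shows "\<gamma> a \<in> Z"
proof -
  have aM: "a \<in> M" using Z_M assms .
  have "op_mult (\<gamma> a) b = op_mult b (\<gamma> a)" if b: "b \<in> M" for b
  proof -
    have gb: "\<gamma> b \<in> M" using gM b .
    have "op_mult (\<gamma> a) b = op_mult (\<gamma> a) (\<gamma> (\<gamma> b))" using g_inv b by simp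
    also have "\<dots> = \<gamma> (op_mult a (\<gamma> b))" using g_mult aM gb by simp
    also have "\<dots> = \<gamma> (op_mult (\<gamma> b) a)" using Z_comm[OF assms gb] by simp
    also have "\<dots> = op_mult b (\<gamma> a)" using g_mult aM gb g_inv b by simp
    finally show ?thesis .
  qed
  thus ?thesis using gM aM by (simp add: ungraded_center_def)
qed

lemma graded_sub: "graded_subalgebra M \<gamma> Z"
  unfolding graded_subalgebra_def
proof (intro conjI ballI allI)
  show "Z \<subseteq> M" using Z_M by blast
qed (auto intro: id_Z Z_add Z_mult Z_smult Z_g)

lemma ev_M: "a \<in> M \<Longrightarrow> even_part \<gamma> a \<in> M"
  unfolding even_part_def by (intro M_smult M_add gM)

lemma od_M: "a \<in> M \<Longrightarrow> odd_part \<gamma> a \<in> M"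
  unfolding odd_part_def by (intro M_smult M_add gM)

lemma ev_Z: "a \<in> Z \<Longrightarrow> even_part \<gamma> a \<in> Z"
  unfolding even_part_def by (intro Z_smult Z_add Z_g)

lemma od_Z: "a \<in> Z \<Longrightarrow> odd_part \<gamma> a \<in> Z"
  unfolding odd_part_def by (intro Z_smult Z_add Z_g)

lemma ev_g: assumes "a \<in> M" shows "\<gamma> (even_part \<gamma> a) = even_part \<gamma> a"
proof -
  have "\<gamma> (even_part \<gamma> a) = op_smult (1/2) (op_add (\<gamma> a) a)"
    unfolding even_part_def using assms gM M_add g_smult g_add g_inv by simp
  thus ?thesis unfolding even_part_def by (simp add: op_smult_def op_add_def fun_eq_iff algebra_simps)
qed

lemma od_g: assumes "a \<in> M" shows "\<gamma> (odd_part \<gamma> a) = op_smult (-1) (odd_part \<gamma> a)"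
proof -
  have "\<gamma> (odd_part \<gamma> a) = op_smult (1/2) (op_add (\<gamma> a) (op_smult (-1) a))"
    unfolding odd_part_def using assms gM M_add M_smult g_smult g_add g_inv by simp
  thus ?thesis unfolding odd_part_def by (simp add: op_smult_def op_add_def fun_eq_iff algebra_simps)
qed

lemma ev_od: "op_add (even_part \<gamma> a) (odd_part \<gamma> a) = a"
  unfolding even_part_def odd_part_def by (simp add: op_smult_def op_add_def fun_eq_iff algebra_simps)

lemma Z0_scalar: assumes "a \<in> Z" "\<gamma> a = a" shows "\<exists>c. a = op_smult c op_id"
proof -
  have aM: "a \<in> M" using Z_M assms(1) .
  have "super_comm \<gamma> a b = op_zero" if b: "b \<in> M" for b
  proof -
    have e: "even_part \<gamma> a = a" unfolding even_part_def assms(2)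
      by (simp add: op_smult_def op_add_def fun_eq_iff)
    have o: "odd_part \<gamma> a = op_zero" unfolding odd_part_def assms(2)
      by (simp add: op_smult_def op_add_def op_zero_def fun_eq_iff)
    have b0: "even_part \<gamma> b \<in> M" and b1: "odd_part \<gamma> b \<in> M" using ev_M od_M b by auto
    have c0: "op_mult a (even_part \<gamma> b) = op_mult (even_part \<gamma> b) a" using Z_comm[OF assms(1) b0] .
    have c1: "op_mult a (odd_part \<gamma> b) = op_mult (odd_part \<gamma> b) a" using Z_comm[OF assms(1) b1] .
    have z0: "op_mult (even_part \<gamma> b) op_zero = op_zero"
      using bnd_zero[OF MB[OF b0]] by (simp add: op_mult_def op_zero_def fun_eq_iff)
    have z1: "op_mult (odd_part \<gamma> b) op_zero = op_zero"
      using bnd_zero[OF MB[OF b1]] by (simp add: op_mult_def op_zero_def fun_eq_iff)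
    show ?thesis
      unfolding super_comm_def Let_def e o op_comm_def op_anticomm_def c0 c1 z0 z1
      by (simp add: op_mult_def op_add_def op_smult_def op_zero_def fun_eq_iff)
  qed
  hence "a \<in> graded_center M \<gamma>" using aM by (simp add: graded_center_def)
  thus ?thesis using gc by auto
qed

lemma scalar_Z: "op_smult c op_id \<in> Z"
  using Z_smult[OF id_Z] .

end


lemma sc_add: "op_add (op_smult c op_id) (op_smult d op_id) = op_smult (c+d) op_id"
  by (simp add: op_add_def op_smult_def fun_eq_iff algebra_simps)

lemma sc_sc: "op_smult x (op_smult c T) = op_smult (x*c) T"
  by (simp add: op_smult_def fun_eq_iff)

lemma id_sc: "op_id = op_smult 1 op_id"
  by (simp add: op_smult_def fun_eq_iff)

context sv begin

lemma adj_central: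
  assumes z: "z \<in> Z" and S: "S \<in> M" and adj: "is_adjoint z S"
  shows "S \<in> Z"
proof -
  have zM: "z \<in> M" using Z_M z .
  have "op_mult S b = op_mult b S" if b: "b \<in> M" for b
  proof (rule ext)
    fix g
    obtain B where B: "B \<in> M" "is_adjoint b B" using adjM b by blast
    show "op_mult S b g = op_mult b S g"
    proof (cases "g \<in> l2")
      case False
      then show ?thesis using bnd_out[OF MB[OF b]] bnd_out[OF MB[OF S]] bnd_zero[OF MB[OF S]]
          bnd_zero[OF MB[OF b]] by (simp add: op_mult_def)
    next
      case True
      have "\<forall>f\<in>l2. ip f (S (b g)) = ip f (b (S g))"
      proof
        fix f :: "'i vec" assume f: "f \<in> l2"
        have zB: "B (z f) = z (B f)" using Z_comm[OF z B(1)] by (metis comp_apply op_mult_def)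
        have "ip f (S (b g)) = ip (z f) (b g)" using adj_app[OF adj f bnd_l2[OF MB[OF b]]] by simp
        also have "\<dots> = ip (B (z f)) g" using adj_sym[OF B(2) bnd_l2[OF MB[OF zM]] True] by simp
        also have "\<dots> = ip (z (B f)) g" using zB by simp
        also have "\<dots> = ip (B f) (S g)" using adj_app[OF adj bnd_l2[OF MB[OF B(1)]] True] .
        also have "\<dots> = ip f (b (S g))" using adj_sym[OF B(2) f bnd_l2[OF MB[OF S]]] .
        finally show "ip f (S (b g)) = ip f (b (S g))" .
      qed
      hence "S (b g) = b (S g)" using vec_eq bnd_l2 MB S b by blast
      thus ?thesis by (simp add: op_mult_def)
    qed
  qed
  thus ?thesis using S by (simp add: ungraded_center_def)
qed

lemma adj_odd:
  assumes zM: "z \<in> M" and gz: "\<gamma> z = op_smult (-1) z" and S: "S \<in> M" and adj: "is_adjoint z S"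
  shows "\<gamma> S = op_smult (-1) S"
proof (rule ext)
  fix g
  have ga: "is_adjoint (op_smult (-1) z) (\<gamma> S)" using g_adj[OF zM S adj] gz by simp
  have gSB: "\<gamma> S \<in> Bnd" using MB gM S by blast
  have mSB: "op_smult (-1) S \<in> Bnd" using Bnd_smult MB S by blast
  show "\<gamma> S g = op_smult (-1) S g"
  proof (cases "g \<in> l2")
    case False
    thus ?thesis using bnd_out[OF gSB] bnd_out[OF mSB] by simp
  next
    case True
    have "\<forall>f\<in>l2. ip f (\<gamma> S g) = ip f (op_smult (-1) S g)"
    proof
      fix f :: "'i vec" assume f: "f \<in> l2"
      have "ip f (\<gamma> S g) = ip (op_smult (-1) z f) g" using adj_app[OF ga f True] by simp
      also have "\<dots> = - ip (z f) g" unfolding op_smult_def by (rule ip_neg_left)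
      also have "\<dots> = - ip f (S g)" using adj_app[OF adj f True] by simp
      also have "\<dots> = ip f (op_smult (-1) S g)" unfolding op_smult_def by (rule ip_neg_right[symmetric])
      finally show "ip f (\<gamma> S g) = ip f (op_smult (-1) S g)" .
    qed
    thus ?thesis using vec_eq bnd_l2[OF gSB] bnd_l2[OF mSB] by blast
  qed
qed

definition odd_el where "odd_el z \<longleftrightarrow> z \<in> Z \<and> \<gamma> z = op_smult (-1) z"

lemma odd_prod:
  assumes "odd_el w" "odd_el v"
  shows "\<exists>d. op_mult w v = op_smult d op_id"
proof -
  have w: "w \<in> Z" "\<gamma> w = op_smult (-1) w" and v: "v \<in> Z" "\<gamma> v = op_smult (-1) v"
    using assms by (auto simp: odd_el_def)
  have wB: "w \<in> Bnd" using MB Z_M w(1) by blast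
  have "\<gamma> (op_mult w v) = op_mult (op_smult (-1) w) (op_smult (-1) v)"
    using g_mult[OF Z_M[OF w(1)] Z_M[OF v(1)]] w(2) v(2) by simp
  also have "\<dots> = op_smult (-1) (op_smult (-1) (op_mult w v))"
    by (simp add: mult_smult_right mult_smult_left[OF wB])
  also have "\<dots> = op_mult w v" by (simp add: op_smult_def fun_eq_iff)
  finally show ?thesis using Z0_scalar Z_mult w(1) v(1) by blast
qed

lemma nonzero_unit:
  assumes oz: "odd_el z" and nz: "z \<noteq> op_zero"
  shows "\<exists>u. odd_el u \<and> op_mult u u = op_id"
proof -
  have z: "z \<in> Z" "\<gamma> z = op_smult (-1) z" using oz by (auto simp: odd_el_def)
  have zM: "z \<in> M" using Z_M z(1) .
  have zB: "z \<in> Bnd" using MB zM .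
  obtain S where S: "S \<in> M" "is_adjoint z S" using adjM zM by blast
  have SZ: "S \<in> Z" using adj_central[OF z(1) S] .
  have oS: "odd_el S" using adj_odd[OF zM z(2) S] SZ by (simp add: odd_el_def)
  obtain c where c: "op_mult z S = op_smult c op_id" using odd_prod[OF oz oS] by blast
  have c0: "c \<noteq> 0"
  proof
    assume c0: "c = 0"
    have "z = op_zero"
    proof (rule ext)
      fix f show "z f = op_zero f"
      proof (cases "f \<in> l2")
        case False thus ?thesis using bnd_out[OF zB] by (simp add: op_zero_def)
      next
        case True
        have "S (z f) = op_mult S z f" by (simp add: op_mult_def)
        also have "\<dots> = op_mult z S f" using Z_comm[OF SZ zM] by simp
        also have "\<dots> = (\<lambda>i. 0)" using c c0 by (simp add: op_smult_def)
        finally have "ip (z f) (z f) = 0" using adj_app[OF S(2) True bnd_l2[OF zB]] by simp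
        thus ?thesis using ip_self_zero[OF bnd_l2[OF zB]] by (simp add: op_zero_def)
      qed
    qed
    thus False using nz by simp
  qed
  obtain e where e: "op_mult z z = op_smult e op_id" using odd_prod[OF oz oz] by blast
  have e0: "e \<noteq> 0"
  proof
    assume e0: "e = 0"
    have "op_mult z (op_mult z S) = op_mult (op_mult z z) S" by (simp add: mult_assoc)
    hence "op_smult c z = op_smult 0 (op_mult op_id S)"
      unfolding c e e0 mult_smult_left[OF zB] mult_smult_right id_right[OF zB] .
    hence "\<forall>f i. c * z f i = 0" by (simp add: op_smult_def fun_eq_iff)
    hence "z = op_zero" using c0 by (simp add: op_zero_def fun_eq_iff)
    thus False using nz by simp
  qed
  define r where "r = csqrt e"
  have rr: "r * r = e" unfolding r_def by (metis power2_csqrt power2_eq_square)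
  have r0: "r \<noteq> 0" using rr e0 by auto
  define u where "u = op_smult (1/r) z"
  have uZ: "u \<in> Z" unfolding u_def using Z_smult z(1) .
  have "\<gamma> u = op_smult (1/r) (op_smult (-1) z)"
    unfolding u_def using g_smult[OF zM] z(2) by simp
  hence gu: "\<gamma> u = op_smult (-1) u" unfolding u_def by (simp add: op_smult_def fun_eq_iff)
  have "op_mult u u = op_smult (1/r) (op_smult (1/r) (op_smult e op_id))"
    unfolding u_def mult_smult_right mult_smult_left[OF zB] e ..
  also have "\<dots> = op_id" using r0 rr[symmetric] by (simp add: op_smult_def fun_eq_iff field_simps)
  finally show ?thesis using uZ gu by (auto simp: odd_el_def)
qed

lemma span:
  assumes ou: "odd_el u" and uu: "op_mult u u = op_id" and ow: "odd_el w"
  shows "\<exists>d. w = op_smult d u"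
proof -
  obtain d where d: "op_mult w u = op_smult d op_id" using odd_prod[OF ow ou] by blast
  have wB: "w \<in> Bnd" and uB: "u \<in> Bnd" using ou ow MB Z_M by (auto simp: odd_el_def)
  have "w = op_mult w (op_mult u u)" using id_right[OF wB] uu by simp
  also have "\<dots> = op_mult (op_smult d op_id) u" by (simp add: mult_assoc[symmetric] d)
  also have "\<dots> = op_smult d u" by (simp add: mult_smult_right id_left[OF uB])
  finally show ?thesis by blast
qed

lemma decomp:
  assumes "a \<in> Z"
  shows "\<exists>c. a = op_add (op_smult c op_id) (odd_part \<gamma> a) \<and> odd_el (odd_part \<gamma> a)"
proof -
  have aM: "a \<in> M" using Z_M assms .
  obtain c where c: "even_part \<gamma> a = op_smult c op_id"
    using Z0_scalar[OF ev_Z[OF assms] ev_g[OF aM]] by blast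
  have "odd_el (odd_part \<gamma> a)" using od_Z[OF assms] od_g[OF aM] by (simp add: odd_el_def)
  thus ?thesis using ev_od[of a] c by metis
qed

end


lemma sc_mult: "op_mult (op_smult c op_id) (op_smult d op_id) = op_smult (c*d) (op_id :: 'i op)"
  using mult_smult_right id_left[OF Bnd_smult[OF Bnd_id]] sc_sc by metis

lemma sd_inj: fixes p q p' q' :: complex assumes "p+q = p'+q'" "p-q = p'-q'" shows "p = p'" "q = q'"
proof -
  have a: "p = ((p+q)+(p-q))/2" "q = ((p+q)-(p-q))/2" by (simp_all add: field_simps)
  have b: "p' = ((p'+q')+(p'-q'))/2" "q' = ((p'+q')-(p'-q'))/2" by (simp_all add: field_simps)
  show "p = p'" "q = q'" using a b assms by metis+
qed

context sv begin

lemma g_sc: "\<gamma> (op_smult c op_id) = op_smult c op_id"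
  using g_smult[OF idM] g_id by simp

lemma iso_C:
  assumes no: "\<forall>z. odd_el z \<longrightarrow> z = op_zero"
  shows "\<exists>\<phi>. iso_to_C Z \<gamma> \<phi>"
proof -
  have rep: "\<exists>c. a = op_smult c op_id" if a: "a \<in> Z" for a
  proof -
    obtain c where c: "a = op_add (op_smult c op_id) (odd_part \<gamma> a)" "odd_el (odd_part \<gamma> a)"
      using decomp[OF a] by blast
    hence "a = op_add (op_smult c op_id) op_zero" using no by metis
    hence "a = op_smult c op_id" by (simp add: op_add_def op_zero_def fun_eq_iff)
    thus ?thesis by blast
  qed
  define \<phi> where "\<phi> a = (THE c. a = op_smult c (op_id :: 'i op))" for a
  have phi: "\<phi> (op_smult c op_id) = c" for c
    unfolding \<phi>_def by (rule the_equality) (auto dest: sc_inj)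
  have inj: "inj_on \<phi> Z"
  proof (rule inj_onI)
    fix a b assume "a \<in> Z" "b \<in> Z" "\<phi> a = \<phi> b"
    thus "a = b" using rep phi by metis
  qed
  have surj: "\<phi> ` Z = UNIV"
  proof -
    have "c \<in> \<phi> ` Z" for c using phi[of c] scalar_Z[of c] by (metis image_eqI)
    thus ?thesis by blast
  qed
  have add: "\<phi> (op_add a b) = \<phi> a + \<phi> b" if "a \<in> Z" "b \<in> Z" for a b
    using rep[OF that(1)] rep[OF that(2)] phi sc_add by metis
  have mult: "\<phi> (op_mult a b) = \<phi> a * \<phi> b" if "a \<in> Z" "b \<in> Z" for a b
    using rep[OF that(1)] rep[OF that(2)] phi sc_mult by metis
  have sm: "\<phi> (op_smult x a) = x * \<phi> a" if "a \<in> Z" for a x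
    using rep[OF that(1)] phi sc_sc by metis
  have one: "\<phi> op_id = 1" using phi id_sc by metis
  have gg: "\<phi> (\<gamma> a) = \<phi> a" if "a \<in> Z" for a
    using rep[OF that(1)] g_sc by metis
  have "iso_to_C Z \<gamma> \<phi>"
    unfolding iso_to_C_def super_alg_iso_def bij_betw_def
    using inj surj add mult sm one gg by simp
  thus ?thesis by blast
qed

definition rep where "rep u p q = op_add (op_smult p op_id) (op_smult q u)"

lemma iso_CC:
  assumes ou: "odd_el u" and uu: "op_mult u u = op_id"
  shows "\<exists>\<phi>. iso_to_CC Z \<gamma> \<phi>"
proof -
  have uZ: "u \<in> Z" and gu: "\<gamma> u = op_smult (-1) u" using ou by (auto simp: odd_el_def)
  have uM: "u \<in> M" using Z_M uZ .
  have uB: "u \<in> Bnd" using MB uM .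
  have all: "\<exists>p q. a = rep u p q" if a: "a \<in> Z" for a
  proof -
    obtain c where c: "a = op_add (op_smult c op_id) (odd_part \<gamma> a)" "odd_el (odd_part \<gamma> a)"
      using decomp[OF a] by blast
    obtain d where "odd_part \<gamma> a = op_smult d u" using span[OF ou uu c(2)] by blast
    thus ?thesis using c(1) unfolding rep_def by metis
  qed
  have repZ: "rep u p q \<in> Z" for p q
    unfolding rep_def by (intro Z_add Z_smult id_Z uZ)
  have grep: "\<gamma> (rep u p q) = rep u p (-q)" for p q
  proof -
    have "\<gamma> (rep u p q) = op_add (\<gamma> (op_smult p op_id)) (\<gamma> (op_smult q u))"
      unfolding rep_def using g_add M_smult idM uM by simp
    also have "\<dots> = op_add (op_smult p op_id) (op_smult q (op_smult (-1) u))"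
      using g_sc g_smult[OF uM] gu by simp
    also have "\<dots> = rep u p (-q)" unfolding rep_def by (simp add: op_smult_def fun_eq_iff)
    finally show ?thesis .
  qed
  have unz: "\<exists>f i. u f i \<noteq> 0"
  proof (rule ccontr)
    assume "\<not> ?thesis"
    hence "op_mult u u = op_zero" by (simp add: op_mult_def op_zero_def fun_eq_iff)
    hence "op_smult 1 (op_id :: 'i op) = op_smult 0 op_id" using uu
      by (simp add: op_smult_def op_zero_def fun_eq_iff)
    thus False using sc_inj by fastforce
  qed
  have rep_inj: "p = p' \<and> q = q'" if eq: "rep u p q = rep u p' q'" for p q p' q'
  proof -
    have eq2: "rep u p (-q) = rep u p' (-q')" using grep eq by metis
    have "op_add (rep u p q) (rep u p (-q)) = op_add (rep u p' q') (rep u p' (-q'))" using eq eq2 by simp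
    hence "op_smult (2*p) (op_id :: 'i op) = op_smult (2*p') op_id"
      unfolding rep_def by (simp add: op_add_def op_smult_def fun_eq_iff algebra_simps)
    hence pp: "p = p'" using sc_inj by fastforce
    hence "op_smult q u = op_smult q' u" using eq unfolding rep_def
      by (simp add: op_add_def op_smult_def fun_eq_iff)
    moreover obtain f i where "u f i \<noteq> 0" using unz by blast
    ultimately have "q = q'" by (metis mult_cancel_right op_smult_def)
    thus ?thesis using pp by simp
  qed
  define \<phi> where "\<phi> a = (let pq = (THE pq. a = rep u (fst pq) (snd pq)) in (fst pq + snd pq, fst pq - snd pq))" for a
  have the_pq: "(THE pq. rep u p q = rep u (fst pq) (snd pq)) = (p, q)" for p q
    by (rule the_equality) (auto dest: rep_inj)
  have phi: "\<phi> (rep u p q) = (p + q, p - q)" for p q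
    unfolding \<phi>_def the_pq by simp
  have radd: "op_add (rep u p q) (rep u p' q') = rep u (p+p') (q+q')" for p q p' q'
    unfolding rep_def by (simp add: op_add_def op_smult_def fun_eq_iff algebra_simps)
  have rsm: "op_smult x (rep u p q) = rep u (x*p) (x*q)" for x p q
    unfolding rep_def by (simp add: op_add_def op_smult_def fun_eq_iff algebra_simps)
  have rone: "op_id = rep u 1 0"
    unfolding rep_def by (simp add: op_add_def op_smult_def fun_eq_iff)
  have rmult: "op_mult (rep u p q) (rep u p' q') = rep u (p*p' + q*q') (p*q' + q*p')" for p q p' q'
  proof -
    have YB: "rep u p' q' \<in> Bnd" using MB Z_M repZ by blast
    have sB: "op_smult p' (op_id :: 'i op) \<in> Bnd" "op_smult q' u \<in> Bnd"
      using Bnd_smult Bnd_id uB by auto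
    have uY: "op_mult u (rep u p' q') = op_add (op_smult p' u) (op_smult q' op_id)"
      unfolding rep_def mult_add_left[OF uB sB] mult_smult_left[OF uB] id_right[OF uB] uu ..
    have "op_mult (rep u p q) (rep u p' q') =
        op_add (op_smult p (rep u p' q')) (op_smult q (op_mult u (rep u p' q')))"
      unfolding rep_def[of u p q] mult_add_right mult_smult_right id_left[OF YB] ..
    also have "\<dots> = rep u (p*p' + q*q') (p*q' + q*p')"
      unfolding uY unfolding rep_def by (simp add: op_add_def op_smult_def fun_eq_iff algebra_simps)
    finally show ?thesis .
  qed
  have inj: "inj_on \<phi> Z"
  proof (rule inj_onI)
    fix a b assume a: "a \<in> Z" and b: "b \<in> Z" and e: "\<phi> a = \<phi> b"
    obtain p q where pq: "a = rep u p q" using all[OF a] by blast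
    obtain p' q' where pq': "b = rep u p' q'" using all[OF b] by blast
    have "p + q = p' + q'" "p - q = p' - q'" using e unfolding pq pq' phi by auto
    hence "p = p'" "q = q'" using sd_inj by blast+
    thus "a = b" using pq pq' by simp
  qed
  have surj: "\<phi> ` Z = UNIV"
  proof -
    have "st \<in> \<phi> ` Z" for st
    proof -
      obtain s t where st: "st = (s, t)" by (cases st)
      have "\<phi> (rep u ((s+t)/2) ((s-t)/2)) = (s, t)" unfolding phi by (simp add: field_simps)
      thus ?thesis using repZ st by (metis image_eqI)
    qed
    thus ?thesis by blast
  qed
  have "iso_to_CC Z \<gamma> \<phi>"
    unfolding iso_to_CC_def super_alg_iso_def bij_betw_def
  proof (intro conjI inj surj ballI allI)
    fix a b assume a: "a \<in> Z" and b: "b \<in> Z"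
    obtain p q where pq: "a = rep u p q" using all[OF a] by blast
    obtain p' q' where pq': "b = rep u p' q'" using all[OF b] by blast
    show "\<phi> (op_add a b) = (case \<phi> a of (x, y) \<Rightarrow> \<lambda>(u, v). (x + u, y + v)) (\<phi> b)"
      unfolding pq pq' radd phi by simp
    show "\<phi> (op_mult a b) = (case \<phi> a of (x, y) \<Rightarrow> \<lambda>(u, v). (x * u, y * v)) (\<phi> b)"
      unfolding pq pq' rmult phi by (simp add: algebra_simps)
  next
    fix c a assume a: "a \<in> Z"
    obtain p q where pq: "a = rep u p q" using all[OF a] by blast
    show "\<phi> (op_smult c a) = (case \<phi> a of (x, y) \<Rightarrow> (c * x, c * y))"
      unfolding pq rsm phi by (simp add: algebra_simps)
  next
    show "\<phi> op_id = (1, 1)" unfolding rone phi by simp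
  next
    fix a assume a: "a \<in> Z"
    obtain p q where pq: "a = rep u p q" using all[OF a] by blast
    show "\<phi> (\<gamma> a) = (case \<phi> a of (x, y) \<Rightarrow> (y, x))"
      unfolding pq grep phi by simp
  qed
  thus ?thesis by blast
qed

lemma main:
  "graded_subalgebra M \<gamma> Z \<and> ((\<exists>\<phi>. iso_to_C Z \<gamma> \<phi>) \<or> (\<exists>\<phi>. iso_to_CC Z \<gamma> \<phi>))"
proof (cases "\<forall>z. odd_el z \<longrightarrow> z = op_zero")
  case True thus ?thesis using graded_sub iso_C by blast
next
  case False
  then obtain z where "odd_el z" "z \<noteq> op_zero" by blast
  then obtain u where "odd_el u" "op_mult u u = op_id" using nonzero_unit by blast
  thus ?thesis using graded_sub iso_CC by blast
qed

end

theorem lemma2p2: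
  fixes M :: "'i op set" and \<gamma> :: "'i op \<Rightarrow> 'i op"
  assumes "super_vN_algebra M \<gamma>"
    and "graded_center M \<gamma> = {op_smult c op_id | c. True}"
  shows "graded_subalgebra M \<gamma> (ungraded_center M) \<and>
    ((\<exists>\<phi>. iso_to_C (ungraded_center M) \<gamma> \<phi>) \<or>
     (\<exists>\<phi>. iso_to_CC (ungraded_center M) \<gamma> \<phi>))"
proof -
  interpret sv M \<gamma> using assms by (unfold_locales)
  show ?thesis by (rule main)
qed


end
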